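(* Let $d=2$, let $(\mathbb Q_1,\mathbb Q_2)$ be a numéraire-consistent family of probability measures, and let $\overline{\mathbb Q}$ be the valuation measure with respect to the basket associated with it (namely $\overline{\mathbb Q}=\overline S_1(0)\mathbb Q_1+\overline S_2(0)\mathbb Q_2$). Then for every $r\in[0,T]$ and every $C\in\mathcal C$ with $C_i\in L^1(\mathbb Q_i)$ for $i=1,2$, $$\mathbb E^{\overline{\mathbb Q}}_r[\overline C]=\overline S_1(r)\mathbb E^{\mathbb Q_1}_r[C_1]+\overline S_2(r)\mathbb E^{\mathbb Q_2}_r\big[C_2\mathbf 1_{\{S_{1,2}(T)=\infty\}}\big],$$ and consequently, on $\{1\in\mathfrak A(r)\}$, $$\frac{\mathbb E^{\overline{\mathbb Q}}_r[\overline C]}{\overline S_1(r)}=\mathbb E^{\mathbb Q_1}_r[C_1]+S_{1,2}(r)\,\mathbb E^{\mathbb Q_2}_r\big[C_2\mathbf 1_{\{S_{1,2}(T)=\infty\}}\big].$$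
   Context: Fix $T>0$ and a filtered space $(\Omega,\mathcal{F}(T),(\mathcal{F}(t))_{t\in[0,T]})$ with right-continuous filtration and trivial $\mathcal{F}(0)$. For $x,y\in[0,\infty]$ the product $xy$ is defined except when one is $0$ and the other is $\infty$. With $d=2$, an exchange matrix is $s=(s_{i,j})\in[0,\infty]^{2\times 2}$ with $s_{i,i}=1$ and $s_{i,j}s_{j,k}=s_{i,k}$ whenever the product is defined (so $s_{2,1}=1/s_{1,2}$). $S=(S_{i,j})$ is a right-continuous adapted process with $S(t)$ an exchange matrix for every $t$ and $S_{1,2}(0)\in(0,\infty)$. Active currencies: $\mathfrak{A}(t)=\{i:\sum_jS_{i,j}(t)<\infty\}$. Basket prices: $\overline S_i=1/\sum_jS_{i,j}$. A value vector for $s$ is $v\in[0,\infty]^2$ with $s_{i,j}v_j=v_i$ whenever defined; $\mathcal{C}$ is the set of $\mathcal{F}(T)$-measurable value vectors for $S(T)$, and $\overline C=\frac{1}{|\mathfrak{A}(T)|}\sum_{j\in\mathfrak{A}(T)}\overline S_j(T)C_j$. A family $(\mathbb{Q}_1,\mathbb Q_2)$ of probability measures is numéraire-consistent if $\mathbb{E}^{\mathbb{Q}_i}[S_{i,j}(t)\mathbf{1}_A]=S_{i,j}(0)\,\mathbb{Q}_j(A\cap\{S_{j,i}(t)>0\})$ for all $i,j\in\{1,2\}$, $t\in[0,T]$, $A\in\mathcal{F}(t)$. $\mathbb{E}^{\mathbb Q}_r$ is conditional expectation given $\mathcal F(r)$. *)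

theory Defs
  imports "HOL-Probability.Probability"
begin

text \<open>Currencies are indexed by the natural numbers 1 and 2 (d = 2).
  Quantities in [0,\<infinity>] are modelled by ennreal.\<close>

definition prod_defined :: "ennreal \<Rightarrow> ennreal \<Rightarrow> bool" where
  "prod_defined x y \<longleftrightarrow> \<not> (x = 0 \<and> y = \<top>) \<and> \<not> (x = \<top> \<and> y = 0)"

definition exchange_matrix :: "(nat \<Rightarrow> nat \<Rightarrow> ennreal) \<Rightarrow> bool" where
  "exchange_matrix s \<longleftrightarrow>
     (\<forall>i\<in>{1,2}. s i i = 1) \<and>
     (\<forall>i\<in>{1,2}. \<forall>j\<in>{1,2}. \<forall>k\<in>{1,2}.
        prod_defined (s i j) (s j k) \<longrightarrow> s i j * s j k = s i k)"

definition active :: "(nat \<Rightarrow> nat \<Rightarrow> ennreal) \<Rightarrow> nat set" where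
  "active s = {i \<in> {1,2}. (\<Sum>j\<in>{1,2}. s i j) < \<top>}"

definition basket_price :: "(nat \<Rightarrow> nat \<Rightarrow> ennreal) \<Rightarrow> nat \<Rightarrow> ennreal" where
  "basket_price s i = 1 / (\<Sum>j\<in>{1,2}. s i j)"

definition value_vector :: "(nat \<Rightarrow> nat \<Rightarrow> ennreal) \<Rightarrow> (nat \<Rightarrow> ennreal) \<Rightarrow> bool" where
  "value_vector s v \<longleftrightarrow>
     (\<forall>i\<in>{1,2}. \<forall>j\<in>{1,2}. prod_defined (s i j) (v j) \<longrightarrow> s i j * v j = v i)"

definition basket_value :: "(nat \<Rightarrow> nat \<Rightarrow> ennreal) \<Rightarrow> (nat \<Rightarrow> ennreal) \<Rightarrow> ennreal" where
  "basket_value s c = (1 / of_nat (card (active s))) * (\<Sum>j\<in>active s. basket_price s j * c j)"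

text \<open>Filtered space (Omega, F(T), (F(t))_{t in [0,T]}): M carries (Omega, F(T)),
  F t carries F(t); right-continuous, with trivial F(0).\<close>
definition filtration :: "'a measure \<Rightarrow> (real \<Rightarrow> 'a measure) \<Rightarrow> real \<Rightarrow> bool" where
  "filtration M F T \<longleftrightarrow>
     (\<forall>t\<in>{0..T}. subalgebra M (F t)) \<and>
     (\<forall>s t. 0 \<le> s \<longrightarrow> s \<le> t \<longrightarrow> t \<le> T \<longrightarrow> sets (F s) \<subseteq> sets (F t)) \<and>
     sets (F T) = sets M \<and>
     (\<forall>t\<in>{0..<T}. sets (F t) = (\<Inter>u\<in>{t<..T}. sets (F u))) \<and>
     sets (F 0) = {{}, space M}"

definition exchange_process ::
  "'a measure \<Rightarrow> (real \<Rightarrow> 'a measure) \<Rightarrow> real \<Rightarrow> (real \<Rightarrow> 'a \<Rightarrow> nat \<Rightarrow> nat \<Rightarrow> ennreal) \<Rightarrow> bool" where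
  "exchange_process M F T S \<longleftrightarrow>
     (\<forall>t\<in>{0..T}. \<forall>\<omega>\<in>space M. exchange_matrix (S t \<omega>)) \<and>
     (\<forall>t\<in>{0..T}. \<forall>i\<in>{1,2}. \<forall>j\<in>{1,2}. (\<lambda>\<omega>. S t \<omega> i j) \<in> borel_measurable (F t)) \<and>
     (\<forall>\<omega>\<in>space M. \<forall>i\<in>{1,2}. \<forall>j\<in>{1,2}. \<forall>t\<in>{0..<T}.
        ((\<lambda>u. S u \<omega> i j) \<longlongrightarrow> S t \<omega> i j) (at_right t)) \<and>
     (\<forall>\<omega>\<in>space M. 0 < S 0 \<omega> 1 2 \<and> S 0 \<omega> 1 2 < \<top>)"

definition claim ::
  "'a measure \<Rightarrow> real \<Rightarrow> (real \<Rightarrow> 'a \<Rightarrow> nat \<Rightarrow> nat \<Rightarrow> ennreal) \<Rightarrow> ('a \<Rightarrow> nat \<Rightarrow> ennreal) \<Rightarrow> bool" where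
  "claim M T S C \<longleftrightarrow>
     (\<forall>i\<in>{1,2}. (\<lambda>\<omega>. C \<omega> i) \<in> borel_measurable M) \<and>
     (\<forall>\<omega>\<in>space M. value_vector (S T \<omega>) (C \<omega>))"

definition numeraire_consistent ::
  "'a measure \<Rightarrow> (real \<Rightarrow> 'a measure) \<Rightarrow> real \<Rightarrow> (real \<Rightarrow> 'a \<Rightarrow> nat \<Rightarrow> nat \<Rightarrow> ennreal)
     \<Rightarrow> (nat \<Rightarrow> 'a measure) \<Rightarrow> bool" where
  "numeraire_consistent M F T S Q \<longleftrightarrow>
     (\<forall>i\<in>{1,2}. prob_space (Q i) \<and> sets (Q i) = sets M) \<and>
     (\<forall>i\<in>{1,2}. \<forall>j\<in>{1,2}. \<forall>t\<in>{0..T}. \<forall>A\<in>sets (F t). \<forall>\<omega>\<in>space M.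
        (\<integral>\<^sup>+x. S t x i j * indicator A x \<partial>Q i)
          = S 0 \<omega> i j * emeasure (Q j) (A \<inter> {x\<in>space M. 0 < S t x j i}))"

text \<open>Valuation measure w.r.t. the basket: Qbar = Sbar_1(0) Q_1 + Sbar_2(0) Q_2,
  where s0 is the (deterministic) value S(0).\<close>
definition valuation_measure ::
  "'a measure \<Rightarrow> (nat \<Rightarrow> nat \<Rightarrow> ennreal) \<Rightarrow> (nat \<Rightarrow> 'a measure) \<Rightarrow> 'a measure" where
  "valuation_measure M s0 Q = measure_of (space M) (sets M)
     (\<lambda>A. basket_price s0 1 * emeasure (Q 1) A + basket_price s0 2 * emeasure (Q 2) A)"

end

theory Submission
  imports Defs
begin

lemma Qbar_emeasure:
  assumes s1: "sets Q1 = sets M" and s2: "sets Q2 = sets M" and A: "A \<in> sets M"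
  shows "emeasure (measure_of (space M) (sets M) (\<lambda>A. a * emeasure Q1 A + b * emeasure Q2 A)) A
     = a * emeasure Q1 A + b * emeasure Q2 A"
proof (rule emeasure_measure_of_sigma)
  show "sigma_algebra (space M) (sets M)" by (rule sets.sigma_algebra_axioms)
  show "positive (sets M) (\<lambda>A. a * emeasure Q1 A + b * emeasure Q2 A)"
    by (simp add: positive_def)
  show "countably_additive (sets M) (\<lambda>A. a * emeasure Q1 A + b * emeasure Q2 A)"
    unfolding countably_additive_def
  proof (intro allI impI)
    fix F :: "nat \<Rightarrow> _" assume F: "range F \<subseteq> sets M" "disjoint_family F" "\<Union> (range F) \<in> sets M"
    have "(\<Sum>i. a * emeasure Q1 (F i) + b * emeasure Q2 (F i))
        = (\<Sum>i. a * emeasure Q1 (F i)) + (\<Sum>i. b * emeasure Q2 (F i))"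
      by (rule suminf_add[symmetric]) auto
    also have "\<dots> = a * (\<Sum>i. emeasure Q1 (F i)) + b * (\<Sum>i. emeasure Q2 (F i))"
      by (simp add: ennreal_suminf_cmult)
    also have "\<dots> = a * emeasure Q1 (\<Union> (range F)) + b * emeasure Q2 (\<Union> (range F))"
      using F s1 s2 by (simp add: suminf_emeasure)
    finally show "(\<Sum>i. a * emeasure Q1 (F i) + b * emeasure Q2 (F i))
        = a * emeasure Q1 (\<Union> (range F)) + b * emeasure Q2 (\<Union> (range F))" .
  qed
qed (rule A)

lemma Qbar_integral:
  assumes s1: "sets Q1 = sets M" and s2: "sets Q2 = sets M" and f: "f \<in> borel_measurable M"
  shows "(\<integral>\<^sup>+x. f x \<partial>(measure_of (space M) (sets M) (\<lambda>A. a * emeasure Q1 A + b * emeasure Q2 A)))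
     = a * (\<integral>\<^sup>+x. f x \<partial>Q1) + b * (\<integral>\<^sup>+x. f x \<partial>Q2)"
  using f
proof induction
  case (cong f g)
  have sp1: "space Q1 = space M" using s1 by (rule sets_eq_imp_space_eq)
  have sp2: "space Q2 = space M" using s2 by (rule sets_eq_imp_space_eq)
  have "(\<integral>\<^sup>+x. f x \<partial>(measure_of (space M) (sets M) (\<lambda>A. a * emeasure Q1 A + b * emeasure Q2 A)))
    = (\<integral>\<^sup>+x. g x \<partial>(measure_of (space M) (sets M) (\<lambda>A. a * emeasure Q1 A + b * emeasure Q2 A)))"
    by (rule nn_integral_cong) (simp add: cong.hyps space_measure_of_conv)
  moreover have "(\<integral>\<^sup>+x. f x \<partial>Q1) = (\<integral>\<^sup>+x. g x \<partial>Q1)"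
    by (rule nn_integral_cong) (simp add: cong.hyps sp1)
  moreover have "(\<integral>\<^sup>+x. f x \<partial>Q2) = (\<integral>\<^sup>+x. g x \<partial>Q2)"
    by (rule nn_integral_cong) (simp add: cong.hyps sp2)
  ultimately show ?case using cong by simp
next
  case (set A)
  have "A \<in> sets (measure_of (space M) (sets M) (\<lambda>A. a * emeasure Q1 A + b * emeasure Q2 A))"
    using set by simp
  then show ?case using set s1 s2 by (simp add: Qbar_emeasure)
next
  case (mult u c)
  have m: "u \<in> borel_measurable (measure_of (space M) (sets M) (\<lambda>A. a * emeasure Q1 A + b * emeasure Q2 A))"
    using mult by (simp add: measurable_def space_measure_of_conv)
  have m1: "u \<in> borel_measurable Q1" using mult s1 by (simp cong: measurable_cong_sets)
  have m2: "u \<in> borel_measurable Q2" using mult s2 by (simp cong: measurable_cong_sets)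
  show ?case using mult m m1 m2
    by (simp add: nn_integral_cmult distrib_left mult.assoc mult.left_commute)
next
  case (add u v)
  have m: "u \<in> borel_measurable (measure_of (space M) (sets M) (\<lambda>A. a * emeasure Q1 A + b * emeasure Q2 A))"
     "v \<in> borel_measurable (measure_of (space M) (sets M) (\<lambda>A. a * emeasure Q1 A + b * emeasure Q2 A))"
    using add by (simp_all add: measurable_def space_measure_of_conv)
  have m1: "u \<in> borel_measurable Q1" "v \<in> borel_measurable Q1" using add s1 by (simp_all cong: measurable_cong_sets)
  have m2: "u \<in> borel_measurable Q2" "v \<in> borel_measurable Q2" using add s2 by (simp_all cong: measurable_cong_sets)
  show ?case using add m m1 m2
    by (simp add: nn_integral_add distrib_left algebra_simps)
next
  case (seq U)
  have m: "\<And>i. U i \<in> borel_measurable (measure_of (space M) (sets M) (\<lambda>A. a * emeasure Q1 A + b * emeasure Q2 A))"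
    using seq by (simp add: measurable_def space_measure_of_conv)
  have m1: "\<And>i. U i \<in> borel_measurable Q1" using seq s1 by (simp cong: measurable_cong_sets)
  have m2: "\<And>i. U i \<in> borel_measurable Q2" using seq s2 by (simp cong: measurable_cong_sets)
  have "(\<integral>\<^sup>+x. (SUP i. U i) x \<partial>(measure_of (space M) (sets M) (\<lambda>A. a * emeasure Q1 A + b * emeasure Q2 A)))
     = (SUP i. a * (\<integral>\<^sup>+x. U i x \<partial>Q1) + b * (\<integral>\<^sup>+x. U i x \<partial>Q2))"
    using seq m by (simp add: nn_integral_monotone_convergence_SUP image_comp)
  also have "\<dots> = (SUP i. a * (\<integral>\<^sup>+x. U i x \<partial>Q1)) + (SUP i. b * (\<integral>\<^sup>+x. U i x \<partial>Q2))"
  proof -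
    have inc: "incseq U" using seq by simp
    have mono: "\<And>m n x. m \<le> n \<Longrightarrow> U m x \<le> U n x" using inc by (simp add: incseq_def le_fun_def)
    show ?thesis using mono by (intro ennreal_SUP_add) (auto intro!: mult_left_mono nn_integral_mono simp: incseq_def)
  qed
  also have "\<dots> = a * (SUP i. (\<integral>\<^sup>+x. U i x \<partial>Q1)) + b * (SUP i. (\<integral>\<^sup>+x. U i x \<partial>Q2))"
    by (simp add: SUP_mult_left_ennreal)
  also have "\<dots> = a * (\<integral>\<^sup>+x. (SUP i. U i) x \<partial>Q1) + b * (\<integral>\<^sup>+x. (SUP i. U i) x \<partial>Q2)"
    using seq m1 m2 by (simp add: nn_integral_monotone_convergence_SUP image_comp)
  finally show ?case .
qed

lemma em_diag: "exchange_matrix s \<Longrightarrow> i \<in> {1,2} \<Longrightarrow> s i i = 1"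
  unfolding exchange_matrix_def by blast

lemma em_prod: "exchange_matrix s \<Longrightarrow> i \<in> {1,2} \<Longrightarrow> j \<in> {1,2} \<Longrightarrow> prod_defined (s i j) (s j i) \<Longrightarrow> s i j * s j i = 1"
  unfolding exchange_matrix_def by (metis)

lemma em_zero_top:
  assumes "exchange_matrix s" "i \<in> {1,2}" "j \<in> {1,2}"
  shows "(s i j = 0) = (s j i = \<top>)"
proof
  assume h: "s i j = 0"
  show "s j i = \<top>"
  proof (rule ccontr)
    assume "s j i \<noteq> \<top>"
    then have "prod_defined (s i j) (s j i)" using h by (simp add: prod_defined_def)
    then have "s i j * s j i = 1" using em_prod assms by blast
    then show False using h by simp
  qed
next
  assume h: "s j i = \<top>"
  show "s i j = 0"
  proof (rule ccontr)
    assume "s i j \<noteq> 0"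
    then have "prod_defined (s i j) (s j i)" using h by (simp add: prod_defined_def)
    then have "s i j * s j i = 1" using em_prod assms by blast
    then show False using h \<open>s i j \<noteq> 0\<close> by (simp add: ennreal_mult_top)
  qed
qed

lemma em_inv:
  assumes "exchange_matrix s" "i \<in> {1,2}" "j \<in> {1,2}" "0 < s i j" "s i j < \<top>"
  shows "s i j * s j i = 1"
proof -
  have "s j i \<noteq> 0" using em_zero_top[OF assms(1) assms(3) assms(2)] assms(5) by simp
  then have "prod_defined (s i j) (s j i)" using assms(4,5) by (auto simp add: prod_defined_def)
  then show ?thesis using em_prod assms(1-3) by blast
qed

lemma K1: fixes a b :: ennreal
  assumes "0 < a" "a < \<top>" "a * b = 1"
  shows "1 / (1 + b) = a * (1 / (1 + a))"
proof -
  obtain x where x: "a = ennreal x" "0 < x" using assms(1,2)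
    by (metis ennreal_less_zero_iff less_top_ennreal)
  have "b = ennreal (1/x)"
  proof -
    have "b \<noteq> \<top>"
    proof
      assume "b = \<top>"
      then have "a * b = \<top>" using assms(1) by (simp add: ennreal_mult_top)
      then show False using assms(3) by simp
    qed
    then obtain y where y: "b = ennreal y" "0 \<le> y" by (cases b) auto
    have "ennreal (x * y) = 1" using assms(3) x y by (simp add: ennreal_mult)
    then have "x * y = 1" by (metis ennreal_1 ennreal_inj mult_nonneg_nonneg x(2) y(2) less_le zero_le_one)
    then show ?thesis using y x by (simp add: field_simps)
  qed
  moreover have "1 / (1 + ennreal (1/x)) = ennreal (1 / (1 + 1/x))"
    using x(2) by (metis divide_ennreal ennreal_1 ennreal_plus less_eq_real_def zero_less_divide_1_iff zero_less_one add_pos_pos)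
  moreover have "1 / (1 + ennreal x) = ennreal (1 / (1 + x))"
    using x(2) by (metis divide_ennreal ennreal_1 ennreal_plus less_eq_real_def zero_less_one add_pos_pos)
  moreover have "ennreal x * ennreal (1 / (1 + x)) = ennreal (x * (1 / (1 + x)))"
    using x(2) by (subst ennreal_mult[symmetric]) auto
  moreover have "1 / (1 + 1/x) = x * (1 / (1 + x))" using x(2) by (simp add: field_simps)
  ultimately show ?thesis using x by simp
qed

lemma K2: fixes a :: ennreal assumes "a < \<top>" shows "(1 + a) * (1 / (1 + a)) = 1"
  by (simp add: assms ennreal_times_divide)

lemma K3: "1 / (1 + (\<top>::ennreal)) = 0" by simp

lemma bp1: "exchange_matrix s \<Longrightarrow> basket_price s 1 = 1 / (1 + s 1 2)"
  unfolding basket_price_def using em_diag[of s 1] by simp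

lemma bp2: "exchange_matrix s \<Longrightarrow> basket_price s 2 = 1 / (1 + s 2 1)"
  unfolding basket_price_def using em_diag[of s 2] by (simp add: add.commute)

lemma active_eq: "exchange_matrix s \<Longrightarrow> active s = {i \<in> {1,2}. (if i = 1 then s 1 2 else s 2 1) < \<top>}"
  unfolding active_def using em_diag[of s 1] em_diag[of s 2]
  by (auto simp: add.commute)

lemma half_twice: "1 / 2 * (x + x) = (x::ennreal)"
proof -
  have h: "1 / 2 * (2::ennreal) = 1"
    by (simp only: ennreal_divide_times mult_1) (rule ennreal_divide_self, simp_all)
  have "1 / 2 * (x + x) = (1/2 * 2) * x" by (simp add: mult_2[symmetric] mult.assoc)
  then show ?thesis using h by simp
qed

lemma Cbar_eq:
  assumes em: "exchange_matrix s" and vv: "value_vector s v"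
  shows "basket_value s v = basket_price s 1 * v 1 + basket_price s 2 * (v 2 * (if s 1 2 = \<top> then 1 else 0))"
proof -
  have zt: "(s 1 2 = 0) = (s 2 1 = \<top>)" "(s 2 1 = 0) = (s 1 2 = \<top>)"
    using em_zero_top[OF em] by auto
  consider "s 1 2 = \<top>" | "s 1 2 = 0" | "0 < s 1 2 \<and> s 1 2 < \<top>"
    by (metis less_top not_gr_zero)
  then show ?thesis
  proof cases
    case 1
    then have "active s = {2}" using zt active_eq[OF em] by auto
    then show ?thesis using 1 zt bp1[OF em] bp2[OF em] unfolding basket_value_def by simp
  next
    case 2
    then have "active s = {1}" using zt active_eq[OF em] by auto
    then show ?thesis using 2 zt bp1[OF em] bp2[OF em] unfolding basket_value_def by simp
  next
    case 3
    have inv: "s 1 2 * s 2 1 = 1" using em_inv[OF em, of 1 2] 3 by simp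
    have ne: "s 2 1 \<noteq> \<top>" using 3 zt by auto
    have act: "active s = {1,2}" using 3 ne active_eq[OF em] by (auto simp: top.not_eq_extremum)
    then have c: "card (active s) = 2" by simp
    have "prod_defined (s 1 2) (v 2)" using 3 by (auto simp: prod_defined_def)
    then have v1: "s 1 2 * v 2 = v 1" using vv unfolding value_vector_def by auto
    have b2: "basket_price s 2 = s 1 2 * basket_price s 1"
      using K1[of "s 1 2" "s 2 1"] 3 inv bp1[OF em] bp2[OF em] by simp
    have "basket_price s 2 * v 2 = basket_price s 1 * v 1"
      using b2 v1 by (metis mult.assoc mult.commute)
    then have "basket_value s v = 1 / 2 * (basket_price s 1 * v 1 + basket_price s 1 * v 1)"
      unfolding basket_value_def using c act by simp
    also have "\<dots> = basket_price s 1 * v 1" by (rule half_twice)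
    finally show ?thesis using 3 by (simp add: less_top[symmetric])
  qed
qed

lemma filt_sub: "filtration M F T \<Longrightarrow> t \<in> {0..T} \<Longrightarrow> subalgebra M (F t)"
  unfolding filtration_def by (elim conjE) (drule bspec)
lemma nc_Q: "numeraire_consistent M F T S Q \<Longrightarrow> i \<in> {1,2} \<Longrightarrow> prob_space (Q i) \<and> sets (Q i) = sets M"
  unfolding numeraire_consistent_def by (elim conjE) (drule bspec)
lemma sub_trans_sets: "subalgebra M N \<Longrightarrow> sets Q = sets M \<Longrightarrow> subalgebra Q N"
  unfolding subalgebra_def using sets_eq_imp_space_eq by metis
lemma S_meas: "exchange_process M F T S \<Longrightarrow> t \<in> {0..T} \<Longrightarrow> i \<in> {1,2} \<Longrightarrow> j \<in> {1,2} \<Longrightarrow>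
   (\<lambda>\<omega>. S t \<omega> i j) \<in> borel_measurable (F t)"
  unfolding exchange_process_def by (elim conjE) (drule bspec, assumption)+

lemma nc_eq:
  assumes "numeraire_consistent M F T S Q" "i\<in>{1,2}" "j\<in>{1,2}" "t \<in> {0..T}" "A \<in> sets (F t)" "\<omega> \<in> space M"
  shows "(\<integral>\<^sup>+x. S t x i j * indicator A x \<partial>Q i)
          = S 0 \<omega> i j * emeasure (Q j) (A \<inter> {x\<in>space M. 0 < S t x j i})"
proof -
  have "\<forall>i\<in>{1,2}. \<forall>j\<in>{1,2}. \<forall>t\<in>{0..T}. \<forall>A\<in>sets (F t). \<forall>\<omega>\<in>space M.
        (\<integral>\<^sup>+x. S t x i j * indicator A x \<partial>Q i)
          = S 0 \<omega> i j * emeasure (Q j) (A \<inter> {x\<in>space M. 0 < S t x j i})"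
    using assms(1) unfolding numeraire_consistent_def by (rule conjunct2)
  from this[rule_format, OF assms(2) assms(3) assms(4) assms(5) assms(6)] show ?thesis .
qed

lemma G:
  assumes nc: "numeraire_consistent M F T S Q" and filt: "filtration M F T" and ep: "exchange_process M F T S"
    and t: "t \<in> {0..T}" and i: "i\<in>{1,2}" and j: "j\<in>{1,2}" and \<omega>: "\<omega> \<in> space M"
    and Y: "Y \<in> borel_measurable (F t)"
  shows "(\<integral>\<^sup>+x. S t x i j * Y x \<partial>Q i)
      = S 0 \<omega> i j * (\<integral>\<^sup>+x. indicator {x\<in>space M. 0 < S t x j i} x * Y x \<partial>Q j)"
proof -
  define B where "B = {x\<in>space M. 0 < S t x j i}"
  have sub: "subalgebra M (F t)" using filt t by (rule filt_sub)
  have sQi: "sets (Q i) = sets M" and sQj: "sets (Q j) = sets M" using nc_Q[OF nc] i j by auto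
  have subi: "subalgebra (Q i) (F t)" using sub sQi by (rule sub_trans_sets)
  have subj: "subalgebra (Q j) (F t)" using sub sQj by (rule sub_trans_sets)
  have spF: "space (F t) = space M" using sub unfolding subalgebra_def by simp
  have fF: "(\<lambda>x. S t x i j) \<in> borel_measurable (F t)" using S_meas[OF ep t i j] .
  have gF: "(\<lambda>x. S t x j i) \<in> borel_measurable (F t)" using S_meas[OF ep t j i] .
  have fQ: "(\<lambda>x. S t x i j) \<in> borel_measurable (Q i)" using measurable_from_subalg[OF subi fF] .
  have BF: "B \<in> sets (F t)"
  proof -
    have "(\<lambda>x. S t x j i) -` {0<..} \<inter> space (F t) \<in> sets (F t)"
      by (rule measurable_sets[OF gF]) simp
    moreover have "(\<lambda>x. S t x j i) -` {0<..} \<inter> space (F t) = {x\<in>space (F t). 0 < S t x j i}" by auto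
    ultimately have "{x\<in>space (F t). 0 < S t x j i} \<in> sets (F t)" by simp
    then show ?thesis unfolding B_def spF .
  qed
  have BM: "B \<in> sets M" using BF sub unfolding subalgebra_def by auto
  have indQ: "indicator B \<in> borel_measurable (Q j)" using BM sQj by simp
  define D1 where "D1 = density (Q i) (\<lambda>x. S t x i j)"
  define D2 where "D2 = scale_measure (S 0 \<omega> i j) (density (Q j) (indicator B))"
  have sD1: "sets D1 = sets M" unfolding D1_def using sQi by simp
  have sD2: "sets D2 = sets M" unfolding D2_def using sQj by simp
  have sub1: "subalgebra D1 (F t)" using sub sD1 by (rule sub_trans_sets)
  have sub2: "subalgebra D2 (F t)" using sub sD2 by (rule sub_trans_sets)
  have eq: "restr_to_subalg D1 (F t) = restr_to_subalg D2 (F t)"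
  proof (rule measure_eqI)
    show "sets (restr_to_subalg D1 (F t)) = sets (restr_to_subalg D2 (F t))"
      using sets_restr_to_subalg[OF sub1] sets_restr_to_subalg[OF sub2] by simp
  next
    fix A assume "A \<in> sets (restr_to_subalg D1 (F t))"
    then have AF: "A \<in> sets (F t)" using sets_restr_to_subalg[OF sub1] by simp
    then have AM: "A \<in> sets M" using sub unfolding subalgebra_def by auto
    have "emeasure (restr_to_subalg D1 (F t)) A = emeasure D1 A"
      using emeasure_restr_to_subalg[OF sub1 AF] .
    also have "\<dots> = (\<integral>\<^sup>+x. S t x i j * indicator A x \<partial>Q i)"
      unfolding D1_def using fQ AM sQi by (simp add: emeasure_density)
    also have "\<dots> = S 0 \<omega> i j * emeasure (Q j) (A \<inter> B)"
      unfolding B_def by (rule nc_eq[OF nc i j t AF \<omega>])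
    also have "\<dots> = S 0 \<omega> i j * (\<integral>\<^sup>+x. indicator B x * indicator A x \<partial>Q j)"
    proof -
      have "(\<integral>\<^sup>+x. indicator B x * indicator A x \<partial>Q j) = (\<integral>\<^sup>+x. indicator (A \<inter> B) x \<partial>Q j)"
        by (rule nn_integral_cong) (simp add: indicator_inter_arith mult.commute)
      also have "\<dots> = emeasure (Q j) (A \<inter> B)" using AM BM sQj by simp
      finally show ?thesis by simp
    qed
    also have "\<dots> = emeasure D2 A"
      unfolding D2_def emeasure_scale_measure using indQ AM sQj by (subst emeasure_density) (simp_all add: mult.commute)
    also have "\<dots> = emeasure (restr_to_subalg D2 (F t)) A"
      using emeasure_restr_to_subalg[OF sub2 AF] by simp
    finally show "emeasure (restr_to_subalg D1 (F t)) A = emeasure (restr_to_subalg D2 (F t)) A" .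
  qed
  have YQi: "Y \<in> borel_measurable (Q i)" using measurable_from_subalg[OF subi Y] .
  have YQj: "Y \<in> borel_measurable (Q j)" using measurable_from_subalg[OF subj Y] .
  have "(\<integral>\<^sup>+x. S t x i j * Y x \<partial>Q i) = (\<integral>\<^sup>+x. Y x \<partial>D1)"
    unfolding D1_def using fQ YQi by (simp add: nn_integral_density)
  also have "\<dots> = (\<integral>\<^sup>+x. Y x \<partial>restr_to_subalg D1 (F t))"
    using nn_integral_subalgebra2[OF sub1 Y] by simp
  also have "\<dots> = (\<integral>\<^sup>+x. Y x \<partial>restr_to_subalg D2 (F t))" using eq by simp
  also have "\<dots> = (\<integral>\<^sup>+x. Y x \<partial>D2)"
    using nn_integral_subalgebra2[OF sub2 Y] by simp
  also have "\<dots> = S 0 \<omega> i j * (\<integral>\<^sup>+x. indicator B x * Y x \<partial>Q j)"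
  proof -
    have "Y \<in> borel_measurable (density (Q j) (indicator B))" using YQj by simp
    then show ?thesis unfolding D2_def
      by (simp only: nn_integral_scale_measure nn_integral_density[OF indQ YQj])
  qed
  finally show ?thesis unfolding B_def .
qed

lemma em_proc: assumes "exchange_process M F T S" "t \<in> {0..T}" "\<omega> \<in> space M" shows "exchange_matrix (S t \<omega>)"
  using assms(1)[unfolded exchange_process_def, THEN conjunct1] assms(2,3) by blast

lemma S0_pos: assumes "exchange_process M F T S" "\<omega> \<in> space M" shows "0 < S 0 \<omega> 1 2 \<and> S 0 \<omega> 1 2 < \<top>"
  using assms(1)[unfolded exchange_process_def, THEN conjunct2, THEN conjunct2, THEN conjunct2] assms(2) by blast

lemma set_F:
  assumes "f \<in> borel_measurable N" "subalgebra M N" "P \<in> sets borel"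
  shows "{x\<in>space M. f x \<in> P} \<in> sets N"
proof -
  have "f -` P \<inter> space N \<in> sets N" by (rule measurable_sets[OF assms(1) assms(3)])
  moreover have "space N = space M" using assms(2) unfolding subalgebra_def by simp
  then have "f -` P \<inter> space N = {x\<in>space M. f x \<in> P}" by auto
  ultimately show ?thesis by simp
qed

lemma STAR:
  assumes nc: "numeraire_consistent M F T S Q" and filt: "filtration M F T" and ep: "exchange_process M F T S"
    and t: "t \<in> {0..T}" and i: "i\<in>{1,2}" and j: "j\<in>{1,2}" and ij: "i \<noteq> j" and \<omega>: "\<omega> \<in> space M"
    and X: "X \<in> borel_measurable (F t)"
  shows "1/(1 + S 0 \<omega> i j) * (\<integral>\<^sup>+x. 1/(1 + S t x i j) * X x \<partial>Q i)
       + 1/(1 + S 0 \<omega> j i) * (\<integral>\<^sup>+x. 1/(1 + S t x i j) * X x \<partial>Q j)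
       = 1/(1 + S 0 \<omega> i j) * (\<integral>\<^sup>+x. X x \<partial>Q i)"
proof -
  have T0: "0 \<in> {0..T}" using t by simp
  have em0: "exchange_matrix (S 0 \<omega>)" using em_proc[OF ep T0 \<omega>] .
  have emt: "\<And>x. x \<in> space M \<Longrightarrow> exchange_matrix (S t x)" using em_proc[OF ep t] .
  have ij_cases: "(i = 1 \<and> j = 2) \<or> (i = 2 \<and> j = 1)" using i j ij by auto
  have pos: "0 < S 0 \<omega> i j \<and> S 0 \<omega> i j < \<top>"
    using ij_cases S0_pos[OF ep \<omega>] em_zero_top[OF em0, of 1 2] em_zero_top[OF em0, of 2 1]
    by (auto simp: top.not_eq_extremum zero_less_iff_neq_zero)
  have inv: "S 0 \<omega> i j * S 0 \<omega> j i = 1" using em_inv[OF em0 i j] pos by simp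
  have p0: "1/(1 + S 0 \<omega> j i) = S 0 \<omega> i j * (1/(1 + S 0 \<omega> i j))"
    using K1[of "S 0 \<omega> i j" "S 0 \<omega> j i"] pos inv by simp
  have sub: "subalgebra M (F t)" using filt t by (rule filt_sub)
  have sQi: "sets (Q i) = sets M" and sQj: "sets (Q j) = sets M" using nc_Q[OF nc] i j by auto
  have subi: "subalgebra (Q i) (F t)" using sub sQi by (rule sub_trans_sets)
  have subj: "subalgebra (Q j) (F t)" using sub sQj by (rule sub_trans_sets)
  have spi: "space (Q i) = space M" using sQi by (rule sets_eq_imp_space_eq)
  have spj: "space (Q j) = space M" using sQj by (rule sets_eq_imp_space_eq)
  have fF[measurable]: "(\<lambda>x. S t x i j) \<in> borel_measurable (F t)" using S_meas[OF ep t i j] .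
  have gF[measurable]: "(\<lambda>x. S t x j i) \<in> borel_measurable (F t)" using S_meas[OF ep t j i] .
  define p where "p = (\<lambda>x. 1/(1 + S t x i j) * X x)"
  note [measurable] = X
  have pF: "p \<in> borel_measurable (F t)" unfolding p_def by measurable
  have pQi: "p \<in> borel_measurable (Q i)" using measurable_from_subalg[OF subi pF] .
  have pQj: "p \<in> borel_measurable (Q j)" using measurable_from_subalg[OF subj pF] .
  have fQi: "(\<lambda>x. S t x i j) \<in> borel_measurable (Q i)" using measurable_from_subalg[OF subi fF] .
  have XQi: "X \<in> borel_measurable (Q i)" using measurable_from_subalg[OF subi X] .
  have Gp: "(\<integral>\<^sup>+x. S t x i j * p x \<partial>Q i)
      = S 0 \<omega> i j * (\<integral>\<^sup>+x. indicator {x\<in>space M. 0 < S t x j i} x * p x \<partial>Q j)"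
    by (rule G[OF nc filt ep t i j \<omega> pF])
  have "(\<integral>\<^sup>+x. indicator {x\<in>space M. 0 < S t x j i} x * p x \<partial>Q j) = (\<integral>\<^sup>+x. p x \<partial>Q j)"
  proof (rule nn_integral_cong)
    fix x assume "x \<in> space (Q j)"
    then have x: "x \<in> space M" using spj by simp
    show "indicator {x\<in>space M. 0 < S t x j i} x * p x = p x"
    proof (cases "0 < S t x j i")
      case True then show ?thesis using x by simp
    next
      case False
      then have "S t x j i = 0" by simp
      then have "S t x i j = \<top>" using em_zero_top[OF emt[OF x] j i] by simp
      then show ?thesis unfolding p_def by simp
    qed
  qed
  then have Q2: "1/(1 + S 0 \<omega> j i) * (\<integral>\<^sup>+x. p x \<partial>Q j) = 1/(1 + S 0 \<omega> i j) * (\<integral>\<^sup>+x. S t x i j * p x \<partial>Q i)"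
    using Gp p0 by (simp add: mult.commute mult.left_commute)
  have AEfin: "AE x in Q i. S t x i j < \<top>"
  proof -
    define A where "A = {x\<in>space M. S t x i j \<in> {\<top>}}"
    have AF: "A \<in> sets (F t)" unfolding A_def by (rule set_F[OF fF sub]) simp
    have AM: "A \<in> sets M" using AF sub unfolding subalgebra_def by auto
    have "(\<integral>\<^sup>+x. S t x i j * indicator A x \<partial>Q i)
          = S 0 \<omega> i j * emeasure (Q j) (A \<inter> {x\<in>space M. 0 < S t x j i})"
      by (rule nc_eq[OF nc i j t AF \<omega>])
    also have "A \<inter> {x\<in>space M. 0 < S t x j i} = {}"
    proof (rule equals0I)
      fix x assume "x \<in> A \<inter> {x\<in>space M. 0 < S t x j i}"
      then have x: "x\<in>space M" "S t x i j = \<top>" "0 < S t x j i" unfolding A_def by auto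
      then have "S t x j i = 0" using em_zero_top[OF emt[OF x(1)] j i] by simp
      then show False using x(3) by simp
    qed
    finally have "(\<integral>\<^sup>+x. S t x i j * indicator A x \<partial>Q i) = 0" by simp
    then have "AE x in Q i. S t x i j * indicator A x = 0"
      using AM sQi fQi by (subst nn_integral_0_iff_AE[symmetric]) simp_all
    then show ?thesis
    proof (rule AE_mp)
      show "AE x in Q i. S t x i j * indicator A x = 0 \<longrightarrow> S t x i j < \<top>"
      proof (rule AE_I2)
        fix x assume x: "x \<in> space (Q i)"
        show "S t x i j * indicator A x = 0 \<longrightarrow> S t x i j < \<top>"
          using x spi unfolding A_def by (auto simp: top.not_eq_extremum indicator_def)
      qed
    qed
  qed
  have "1/(1 + S 0 \<omega> i j) * (\<integral>\<^sup>+x. p x \<partial>Q i) + 1/(1 + S 0 \<omega> j i) * (\<integral>\<^sup>+x. p x \<partial>Q j)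
      = 1/(1 + S 0 \<omega> i j) * ((\<integral>\<^sup>+x. p x \<partial>Q i) + (\<integral>\<^sup>+x. S t x i j * p x \<partial>Q i))"
    using Q2 by (simp add: distrib_left)
  also have "(\<integral>\<^sup>+x. p x \<partial>Q i) + (\<integral>\<^sup>+x. S t x i j * p x \<partial>Q i) = (\<integral>\<^sup>+x. p x + S t x i j * p x \<partial>Q i)"
    using pQi fQi by (simp add: nn_integral_add)
  also have "\<dots> = (\<integral>\<^sup>+x. X x \<partial>Q i)"
  proof (rule nn_integral_cong_AE)
    show "AE x in Q i. p x + S t x i j * p x = X x"
      using AEfin
    proof (rule AE_mp)
      show "AE x in Q i. S t x i j < \<top> \<longrightarrow> p x + S t x i j * p x = X x"
      proof (rule AE_I2, rule impI)
        fix x assume "S t x i j < \<top>"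
        then have "(1 + S t x i j) * (1 / (1 + S t x i j)) = 1" by (rule K2)
        moreover have "p x + S t x i j * p x = (1 + S t x i j) * (1 / (1 + S t x i j)) * X x"
          unfolding p_def by (simp add: distrib_right mult.assoc)
        ultimately show "p x + S t x i j * p x = X x" by simp
      qed
    qed
  qed
  finally show ?thesis unfolding p_def .
qed

lemma space_Qbar: "space (valuation_measure M s Q) = space M"
  unfolding valuation_measure_def by (simp add: space_measure_of_conv)

lemma sets_Qbar: "sets (valuation_measure M s Q) = sets M"
  unfolding valuation_measure_def by simp

lemma KEY:
  assumes nc: "numeraire_consistent M F T S Q" and filt: "filtration M F T" and ep: "exchange_process M F T S"
    and \<omega>: "\<omega> \<in> space M" and t: "t \<in> {0..T}" and X: "X \<in> borel_measurable (F t)"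
  shows "(\<integral>\<^sup>+x. basket_price (S t x) 1 * X x \<partial>valuation_measure M (S 0 \<omega>) Q)
          = basket_price (S 0 \<omega>) 1 * (\<integral>\<^sup>+x. X x \<partial>Q 1)"
    and "(\<integral>\<^sup>+x. basket_price (S t x) 2 * X x \<partial>valuation_measure M (S 0 \<omega>) Q)
          = basket_price (S 0 \<omega>) 2 * (\<integral>\<^sup>+x. X x \<partial>Q 2)"
proof -
  have T0: "0 \<in> {0..T}" using t by simp
  have em0: "exchange_matrix (S 0 \<omega>)" using em_proc[OF ep T0 \<omega>] .
  have emt: "\<And>x. x \<in> space M \<Longrightarrow> exchange_matrix (S t x)" using em_proc[OF ep t] .
  have sub: "subalgebra M (F t)" using filt t by (rule filt_sub)
  have sQ1: "sets (Q 1) = sets M" and sQ2: "sets (Q 2) = sets M" using nc_Q[OF nc] by auto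
  have XM[measurable]: "X \<in> borel_measurable M" using measurable_from_subalg[OF sub X] .
  have f12[measurable]: "(\<lambda>x. S t x 1 2) \<in> borel_measurable M"
    using measurable_from_subalg[OF sub S_meas[OF ep t]] by simp
  have f21[measurable]: "(\<lambda>x. S t x 2 1) \<in> borel_measurable M"
    using measurable_from_subalg[OF sub S_meas[OF ep t]] by simp
  have b0: "basket_price (S 0 \<omega>) 1 = 1/(1 + S 0 \<omega> 1 2)" "basket_price (S 0 \<omega>) 2 = 1/(1 + S 0 \<omega> 2 1)"
    using bp1[OF em0] bp2[OF em0] by auto
  show "(\<integral>\<^sup>+x. basket_price (S t x) 1 * X x \<partial>valuation_measure M (S 0 \<omega>) Q)
          = basket_price (S 0 \<omega>) 1 * (\<integral>\<^sup>+x. X x \<partial>Q 1)"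
  proof -
    have "(\<integral>\<^sup>+x. basket_price (S t x) 1 * X x \<partial>valuation_measure M (S 0 \<omega>) Q)
        = (\<integral>\<^sup>+x. 1/(1 + S t x 1 2) * X x \<partial>valuation_measure M (S 0 \<omega>) Q)"
      by (rule nn_integral_cong) (metis space_Qbar bp1 emt)
    also have "\<dots> = basket_price (S 0 \<omega>) 1 * (\<integral>\<^sup>+x. 1/(1 + S t x 1 2) * X x \<partial>Q 1)
                  + basket_price (S 0 \<omega>) 2 * (\<integral>\<^sup>+x. 1/(1 + S t x 1 2) * X x \<partial>Q 2)"
      unfolding valuation_measure_def by (rule Qbar_integral[OF sQ1 sQ2]) measurable
    also have "\<dots> = basket_price (S 0 \<omega>) 1 * (\<integral>\<^sup>+x. X x \<partial>Q 1)"
      unfolding b0 by (rule STAR[OF nc filt ep t _ _ _ \<omega> X]) auto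
    finally show ?thesis .
  qed
  show "(\<integral>\<^sup>+x. basket_price (S t x) 2 * X x \<partial>valuation_measure M (S 0 \<omega>) Q)
          = basket_price (S 0 \<omega>) 2 * (\<integral>\<^sup>+x. X x \<partial>Q 2)"
  proof -
    have "(\<integral>\<^sup>+x. basket_price (S t x) 2 * X x \<partial>valuation_measure M (S 0 \<omega>) Q)
        = (\<integral>\<^sup>+x. 1/(1 + S t x 2 1) * X x \<partial>valuation_measure M (S 0 \<omega>) Q)"
      by (rule nn_integral_cong) (metis space_Qbar bp2 emt)
    also have "\<dots> = basket_price (S 0 \<omega>) 1 * (\<integral>\<^sup>+x. 1/(1 + S t x 2 1) * X x \<partial>Q 1)
                  + basket_price (S 0 \<omega>) 2 * (\<integral>\<^sup>+x. 1/(1 + S t x 2 1) * X x \<partial>Q 2)"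
      unfolding valuation_measure_def by (rule Qbar_integral[OF sQ1 sQ2]) measurable
    also have "\<dots> = basket_price (S 0 \<omega>) 2 * (\<integral>\<^sup>+x. 1/(1 + S t x 2 1) * X x \<partial>Q 2)
                  + basket_price (S 0 \<omega>) 1 * (\<integral>\<^sup>+x. 1/(1 + S t x 2 1) * X x \<partial>Q 1)"
      by (simp add: add.commute)
    also have "\<dots> = basket_price (S 0 \<omega>) 2 * (\<integral>\<^sup>+x. X x \<partial>Q 2)"
      unfolding b0 by (rule STAR[OF nc filt ep t _ _ _ \<omega> X]) auto
    finally show ?thesis .
  qed
qed

lemma bp2_eq:
  assumes em: "exchange_matrix s" and fin: "s 1 2 < \<top>"
  shows "basket_price s 2 = s 1 2 * basket_price s 1"
proof (cases "s 1 2 = 0")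
  case True
  then have "s 2 1 = \<top>" using em_zero_top[OF em, of 1 2] by simp
  then show ?thesis using True bp2[OF em] by simp
next
  case False
  then have pos: "0 < s 1 2" by (simp add: zero_less_iff_neq_zero)
  have inv: "s 1 2 * s 2 1 = 1" using em_inv[OF em, of 1 2] pos fin by simp
  show ?thesis using K1[of "s 1 2" "s 2 1"] pos fin inv bp1[OF em] bp2[OF em] by simp
qed

lemma active1: "exchange_matrix s \<Longrightarrow> 1 \<in> active s \<Longrightarrow> s 1 2 < \<top>"
  using active_eq[of s] by simp

lemma bp1_ne: assumes em: "exchange_matrix s" shows "basket_price s 1 \<noteq> 0 \<longleftrightarrow> s 1 2 < \<top>"
  using bp1[OF em] by (simp add: ennreal_divide_eq_0_iff top.not_eq_extremum)

lemma bp_fin: assumes em: "exchange_matrix s" shows "basket_price s 1 \<noteq> \<top> \<and> basket_price s 2 \<noteq> \<top>"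
  using bp1[OF em] bp2[OF em] by (simp add: ennreal_divide_eq_top_iff)

lemma final_alg:
  fixes b1 s E1 E2 :: ennreal
  assumes "b1 \<noteq> 0" "b1 \<noteq> \<top>"
  shows "(b1 * E1 + s * b1 * E2) / b1 = E1 + s * E2"
proof -
  have "b1 * E1 + s * b1 * E2 = (E1 + s * E2) * b1" by (simp add: algebra_simps)
  then show ?thesis using ennreal_mult_divide_eq[OF assms] by simp
qed

lemma bp_meas:
  assumes "\<And>i j. i\<in>{1,2} \<Longrightarrow> j\<in>{1,2} \<Longrightarrow> (\<lambda>\<omega>. s \<omega> i j) \<in> borel_measurable N" and k: "k \<in> {1,2}"
  shows "(\<lambda>\<omega>. basket_price (s \<omega>) k) \<in> borel_measurable N"
  unfolding basket_price_def
  by (intro borel_measurable_divide_ennreal borel_measurable_const borel_measurable_sum assms k) auto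

lemma filt_T: "filtration M F T \<Longrightarrow> sets (F T) = sets M"
  unfolding filtration_def by (elim conjE)

theorem mainTheorem10:
  fixes M :: "'a measure" and F :: "real \<Rightarrow> 'a measure" and T r :: real
    and S :: "real \<Rightarrow> 'a \<Rightarrow> nat \<Rightarrow> nat \<Rightarrow> ennreal"
    and Q :: "nat \<Rightarrow> 'a measure" and C :: "'a \<Rightarrow> nat \<Rightarrow> ennreal" and \<omega>0 :: 'a
  assumes "0 < T"
    and "filtration M F T"
    and "exchange_process M F T S"
    and "numeraire_consistent M F T S Q"
    and "\<omega>0 \<in> space M"
    and "r \<in> {0..T}"
    and "claim M T S C"
    and "\<forall>i\<in>{1,2}. (\<integral>\<^sup>+x. C x i \<partial>Q i) < \<top>"
  defines "Qbar \<equiv> valuation_measure M (S 0 \<omega>0) Q"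
  shows "(AE \<omega> in Qbar.
            nn_cond_exp Qbar (F r) (\<lambda>x. basket_value (S T x) (C x)) \<omega>
              = basket_price (S r \<omega>) 1 * nn_cond_exp (Q 1) (F r) (\<lambda>x. C x 1) \<omega>
                + basket_price (S r \<omega>) 2 *
                    nn_cond_exp (Q 2) (F r) (\<lambda>x. C x 2 * indicator {y\<in>space M. S T y 1 2 = \<top>} x) \<omega>)
       \<and> (AE \<omega> in Qbar. 1 \<in> active (S r \<omega>) \<longrightarrow>
            nn_cond_exp Qbar (F r) (\<lambda>x. basket_value (S T x) (C x)) \<omega> / basket_price (S r \<omega>) 1
              = nn_cond_exp (Q 1) (F r) (\<lambda>x. C x 1) \<omega>
                + S r \<omega> 1 2 *
                    nn_cond_exp (Q 2) (F r) (\<lambda>x. C x 2 * indicator {y\<in>space M. S T y 1 2 = \<top>} x) \<omega>)"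
proof -
  note filt = assms(2) and ep = assms(3) and nc = assms(4) and \<omega>0 = assms(5) and r = assms(6) and cl = assms(7)
  have TT: "T \<in> {0..T}" using assms(1) by simp
  have T0: "0 \<in> {0..T}" using assms(1) by simp
  have em0: "exchange_matrix (S 0 \<omega>0)" using em_proc[OF ep T0 \<omega>0] .
  have emT: "\<And>x. x \<in> space M \<Longrightarrow> exchange_matrix (S T x)" using em_proc[OF ep TT] .
  have emr: "\<And>x. x \<in> space M \<Longrightarrow> exchange_matrix (S r x)" using em_proc[OF ep r] .
  have subr: "subalgebra M (F r)" using filt r by (rule filt_sub)
  have setsT: "sets (F T) = sets M" using filt by (rule filt_T)
  have mT: "borel_measurable (F T) = borel_measurable M" by (rule measurable_cong_sets[OF setsT refl])
  have sQ1: "sets (Q 1) = sets M" and sQ2: "sets (Q 2) = sets M" using nc_Q[OF nc] by auto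
  have pQ1: "prob_space (Q 1)" and pQ2: "prob_space (Q 2)" using nc_Q[OF nc] by auto
  have sQb: "sets Qbar = sets M" unfolding Qbar_def by (rule sets_Qbar)
  have spQb: "space Qbar = space M" unfolding Qbar_def by (rule space_Qbar)
  have mQb: "borel_measurable Qbar = borel_measurable M" by (rule measurable_cong_sets[OF sQb refl])
  have mQ1: "borel_measurable (Q 1) = borel_measurable M" by (rule measurable_cong_sets[OF sQ1 refl])
  have mQ2: "borel_measurable (Q 2) = borel_measurable M" by (rule measurable_cong_sets[OF sQ2 refl])
  have SrF: "\<And>i j. i\<in>{1,2} \<Longrightarrow> j\<in>{1,2} \<Longrightarrow> (\<lambda>\<omega>. S r \<omega> i j) \<in> borel_measurable (F r)"
    using S_meas[OF ep r] by blast
  have STM: "\<And>i j. i\<in>{1,2} \<Longrightarrow> j\<in>{1,2} \<Longrightarrow> (\<lambda>\<omega>. S T \<omega> i j) \<in> borel_measurable M"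
    using S_meas[OF ep TT] mT by blast
  have bprF: "\<And>k. k \<in> {1,2} \<Longrightarrow> (\<lambda>\<omega>. basket_price (S r \<omega>) k) \<in> borel_measurable (F r)"
    by (rule bp_meas[OF SrF]) auto
  have bpTM: "\<And>k. k \<in> {1,2} \<Longrightarrow> (\<lambda>\<omega>. basket_price (S T \<omega>) k) \<in> borel_measurable M"
    by (rule bp_meas[OF STM]) auto
  have bprM: "\<And>k. k \<in> {1,2} \<Longrightarrow> (\<lambda>\<omega>. basket_price (S r \<omega>) k) \<in> borel_measurable M"
    using bprF measurable_from_subalg[OF subr] by blast
  have CM: "\<And>i. i\<in>{1,2} \<Longrightarrow> (\<lambda>x. C x i) \<in> borel_measurable M"
    using cl unfolding claim_def by blast
  have vv: "\<And>x. x \<in> space M \<Longrightarrow> value_vector (S T x) (C x)"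
    using cl unfolding claim_def by blast
  define B where "B = {y\<in>space M. S T y 1 2 = \<top>}"
  have BM: "B \<in> sets M"
  proof -
    have "{y\<in>space M. S T y 1 2 \<in> {\<top>}} \<in> sets M"
      by (rule set_F[OF STM[of 1 2]]) (auto simp: subalgebra_def)
    then show ?thesis unfolding B_def by simp
  qed
  define C1 where "C1 = (\<lambda>x. C x 1)"
  define C2 where "C2 = (\<lambda>x. C x 2 * indicator B x)"
  define E1 where "E1 = nn_cond_exp (Q 1) (F r) C1"
  define E2 where "E2 = nn_cond_exp (Q 2) (F r) C2"
  define Cb where "Cb = (\<lambda>x. basket_value (S T x) (C x))"
  define g where "g = (\<lambda>\<omega>. basket_price (S r \<omega>) 1 * E1 \<omega> + basket_price (S r \<omega>) 2 * E2 \<omega>)"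
  have C1M: "C1 \<in> borel_measurable M" unfolding C1_def using CM by simp
  have C2M: "C2 \<in> borel_measurable M" unfolding C2_def using CM[of 2] BM by simp
  have E1F: "E1 \<in> borel_measurable (F r)" unfolding E1_def by simp
  have E2F: "E2 \<in> borel_measurable (F r)" unfolding E2_def by simp
  have gF: "g \<in> borel_measurable (F r)" unfolding g_def
    using bprF[of 1] bprF[of 2] E1F E2F by simp
  have Cb_eq: "\<And>x. x \<in> space M \<Longrightarrow> Cb x = basket_price (S T x) 1 * C1 x + basket_price (S T x) 2 * C2 x"
  proof -
    fix x assume x: "x \<in> space M"
    have "indicator B x = (if S T x 1 2 = \<top> then 1 else (0::ennreal))"
      unfolding B_def using x by simp
    then show "Cb x = basket_price (S T x) 1 * C1 x + basket_price (S T x) 2 * C2 x"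
      unfolding Cb_def C1_def C2_def using Cbar_eq[OF emT[OF x] vv[OF x]] by simp
  qed
  have CbM: "Cb \<in> borel_measurable M"
  proof -
    have "(\<lambda>x. basket_price (S T x) 1 * C1 x + basket_price (S T x) 2 * C2 x) \<in> borel_measurable M"
      using bpTM[of 1] bpTM[of 2] C1M C2M by simp
    then show ?thesis by (subst measurable_cong[OF Cb_eq]) simp_all
  qed
  have subQb: "subalgebra Qbar (F r)" using subr sQb by (rule sub_trans_sets)
  have subQ1: "subalgebra (Q 1) (F r)" using subr sQ1 by (rule sub_trans_sets)
  have subQ2: "subalgebra (Q 2) (F r)" using subr sQ2 by (rule sub_trans_sets)
  have finQb: "finite_measure Qbar"
  proof (rule finite_measureI)
    have "emeasure Qbar (space Qbar) = basket_price (S 0 \<omega>0) 1 * emeasure (Q 1) (space M)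
          + basket_price (S 0 \<omega>0) 2 * emeasure (Q 2) (space M)"
      unfolding spQb unfolding Qbar_def valuation_measure_def by (rule Qbar_emeasure[OF sQ1 sQ2]) simp
    also have "\<dots> = basket_price (S 0 \<omega>0) 1 + basket_price (S 0 \<omega>0) 2"
      using prob_space.emeasure_space_1[OF pQ1] prob_space.emeasure_space_1[OF pQ2]
        sets_eq_imp_space_eq[OF sQ1] sets_eq_imp_space_eq[OF sQ2] by simp
    finally have "emeasure Qbar (space Qbar) \<noteq> \<top>" using bp_fin[OF em0] by simp
    then show "emeasure Qbar (space Qbar) \<noteq> \<infinity>" by (simp add: infinity_ennreal_def)
  qed
  have sfQb: "sigma_finite_subalgebra Qbar (F r)"
    by (rule finite_measure_subalgebra_is_sigma_finite)
       (simp add: finite_measure_subalgebra_def finite_measure_subalgebra_axioms_def finQb subQb)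
  have sfQ1: "sigma_finite_subalgebra (Q 1) (F r)"
    by (rule finite_measure_subalgebra_is_sigma_finite)
       (use subQ1 prob_space.finite_measure[OF pQ1] in \<open>simp add: finite_measure_subalgebra_def finite_measure_subalgebra_axioms_def\<close>)
  have sfQ2: "sigma_finite_subalgebra (Q 2) (F r)"
    by (rule finite_measure_subalgebra_is_sigma_finite)
       (use subQ2 prob_space.finite_measure[OF pQ2] in \<open>simp add: finite_measure_subalgebra_def finite_measure_subalgebra_axioms_def\<close>)
  have intg: "(\<integral>\<^sup>+x \<in> A. Cb x \<partial>Qbar) = (\<integral>\<^sup>+x \<in> A. g x \<partial>Qbar)" if A: "A \<in> sets (F r)" for A
  proof -
    have AM: "A \<in> sets M" using A subr unfolding subalgebra_def by auto
    have IF: "indicator A \<in> borel_measurable (F r)" using A by simp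
    have X1: "(\<lambda>x. C1 x * indicator A x) \<in> borel_measurable (F T)" unfolding mT using C1M AM by simp
    have X2: "(\<lambda>x. C2 x * indicator A x) \<in> borel_measurable (F T)" unfolding mT using C2M AM by simp
    have Y1: "(\<lambda>x. E1 x * indicator A x) \<in> borel_measurable (F r)" using E1F IF by (rule borel_measurable_times_ennreal)
    have Y2: "(\<lambda>x. E2 x * indicator A x) \<in> borel_measurable (F r)" using E2F IF by (rule borel_measurable_times_ennreal)
    have "(\<integral>\<^sup>+x \<in> A. Cb x \<partial>Qbar)
        = (\<integral>\<^sup>+x. basket_price (S T x) 1 * (C1 x * indicator A x)
               + basket_price (S T x) 2 * (C2 x * indicator A x) \<partial>Qbar)"
      by (rule nn_integral_cong) (simp add: spQb Cb_eq algebra_simps)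
    also have "\<dots> = (\<integral>\<^sup>+x. basket_price (S T x) 1 * (C1 x * indicator A x) \<partial>Qbar)
               + (\<integral>\<^sup>+x. basket_price (S T x) 2 * (C2 x * indicator A x) \<partial>Qbar)"
      using bpTM[of 1] bpTM[of 2] C1M C2M AM by (simp add: mQb nn_integral_add)
    also have "\<dots> = basket_price (S 0 \<omega>0) 1 * (\<integral>\<^sup>+x. C1 x * indicator A x \<partial>Q 1)
               + basket_price (S 0 \<omega>0) 2 * (\<integral>\<^sup>+x. C2 x * indicator A x \<partial>Q 2)"
      unfolding Qbar_def using KEY[OF nc filt ep \<omega>0 TT X1] KEY[OF nc filt ep \<omega>0 TT X2] by simp
    also have "(\<integral>\<^sup>+x. C1 x * indicator A x \<partial>Q 1) = (\<integral>\<^sup>+x. E1 x * indicator A x \<partial>Q 1)"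
    proof -
      have "(\<integral>\<^sup>+x. indicator A x * E1 x \<partial>Q 1) = (\<integral>\<^sup>+x. indicator A x * C1 x \<partial>Q 1)"
        unfolding E1_def by (rule sigma_finite_subalgebra.nn_cond_exp_intg[OF sfQ1 IF]) (metis mQ1 C1M)
      then show ?thesis by (simp add: mult.commute)
    qed
    also have "(\<integral>\<^sup>+x. C2 x * indicator A x \<partial>Q 2) = (\<integral>\<^sup>+x. E2 x * indicator A x \<partial>Q 2)"
    proof -
      have "(\<integral>\<^sup>+x. indicator A x * E2 x \<partial>Q 2) = (\<integral>\<^sup>+x. indicator A x * C2 x \<partial>Q 2)"
        unfolding E2_def by (rule sigma_finite_subalgebra.nn_cond_exp_intg[OF sfQ2 IF]) (metis mQ2 C2M)
      then show ?thesis by (simp add: mult.commute)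
    qed
    also have "basket_price (S 0 \<omega>0) 1 * (\<integral>\<^sup>+x. E1 x * indicator A x \<partial>Q 1)
               + basket_price (S 0 \<omega>0) 2 * (\<integral>\<^sup>+x. E2 x * indicator A x \<partial>Q 2)
             = (\<integral>\<^sup>+x. basket_price (S r x) 1 * (E1 x * indicator A x) \<partial>Qbar)
               + (\<integral>\<^sup>+x. basket_price (S r x) 2 * (E2 x * indicator A x) \<partial>Qbar)"
      unfolding Qbar_def using KEY[OF nc filt ep \<omega>0 r Y1] KEY[OF nc filt ep \<omega>0 r Y2] by simp
    also have "\<dots> = (\<integral>\<^sup>+x. basket_price (S r x) 1 * (E1 x * indicator A x)
               + basket_price (S r x) 2 * (E2 x * indicator A x) \<partial>Qbar)"
      using bprM[of 1] bprM[of 2] measurable_from_subalg[OF subr E1F] measurable_from_subalg[OF subr E2F] AM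
      by (subst nn_integral_add) (auto simp: mQb)
    also have "\<dots> = (\<integral>\<^sup>+x \<in> A. g x \<partial>Qbar)"
      by (rule nn_integral_cong) (simp add: g_def algebra_simps)
    finally show ?thesis .
  qed
  have AE1: "AE \<omega> in Qbar. g \<omega> = nn_cond_exp Qbar (F r) Cb \<omega>"
    by (rule sigma_finite_subalgebra.nn_cond_exp_charact[OF sfQb intg]) (simp_all add: mQb CbM gF)
  have AE1': "AE \<omega> in Qbar. nn_cond_exp Qbar (F r) Cb \<omega> = g \<omega>"
    using AE1 by (rule eventually_mono) simp
  have AEsp: "AE \<omega> in Qbar. \<omega> \<in> space M"
    using AE_space[of Qbar] spQb by simp
  have AE2: "AE \<omega> in Qbar. 1 \<in> active (S r \<omega>) \<longrightarrow>
            nn_cond_exp Qbar (F r) Cb \<omega> / basket_price (S r \<omega>) 1 = E1 \<omega> + S r \<omega> 1 2 * E2 \<omega>"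
    using AE1' AEsp
  proof eventually_elim
    case (elim \<omega>)
    show ?case
    proof
      assume act: "1 \<in> active (S r \<omega>)"
      have em: "exchange_matrix (S r \<omega>)" using emr elim(2) .
      have fin: "S r \<omega> 1 2 < \<top>" using active1[OF em act] .
      have b2: "basket_price (S r \<omega>) 2 = S r \<omega> 1 2 * basket_price (S r \<omega>) 1" using bp2_eq[OF em fin] .
      have ne0: "basket_price (S r \<omega>) 1 \<noteq> 0" using bp1_ne[OF em] fin by simp
      have netop: "basket_price (S r \<omega>) 1 \<noteq> \<top>" using bp_fin[OF em] by simp
      show "nn_cond_exp Qbar (F r) Cb \<omega> / basket_price (S r \<omega>) 1 = E1 \<omega> + S r \<omega> 1 2 * E2 \<omega>"
        unfolding elim(1) g_def b2 by (rule final_alg[OF ne0 netop])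
    qed
  qed
  show ?thesis
    using AE1' AE2 unfolding g_def Cb_def E1_def E2_def C1_def C2_def B_def by simp
qed

end
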